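(* Let $d\ge2$ and $p,q\ge0$. Then $$\sum_{j=0}^{\min\{p,q\}}Q^{(d)}_{p-j,q-j}(z)=\frac{d}{p+q+d}\,Q^{(d+1)}_{pq}(z),$$ equivalently, $$Q^{(d)}_{p,q}(z)=\frac{d}{p+q+d}Q^{(d+1)}_{pq}(z)-\frac{d}{p+q+d-2}Q^{(d+1)}_{p-1,q-1}(z),$$ with the convention $Q_{a,b}=0$ if $a<0$ or $b<0$.
   Context: For $d\ge2$ and $p,q\ge0$, the complex Gegenbauer polynomial is the polynomial in $z,\overline z$ $$Q_{pq}^{(d)}(z)=\frac{p+q+d-1}{(d-1)!}\sum_{j=0}^{\min\{p,q\}}(-1)^j\frac{(d+p+q-j-2)!}{j!(p-j)!(q-j)!}z^{p-j}\overline{z}^{q-j}.$$ *)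

theory Defs
  imports "HOL-Analysis.Analysis"
begin

definition cgeg :: "nat \<Rightarrow> nat \<Rightarrow> nat \<Rightarrow> complex \<Rightarrow> complex" where
  "cgeg d p q z =
     of_nat (p + q + d - 1) / of_nat (fact (d - 1)) *
     (\<Sum>j = 0..min p q. (-1) ^ j * of_nat (fact (d + p + q - j - 2)) /
        (of_nat (fact j) * of_nat (fact (p - j)) * of_nat (fact (q - j))) *
        z ^ (p - j) * cnj z ^ (q - j))"

definition cgegi :: "nat \<Rightarrow> int \<Rightarrow> int \<Rightarrow> complex \<Rightarrow> complex" where
  "cgegi d a b z = (if a < 0 \<or> b < 0 then 0 else cgeg d (nat a) (nat b) z)"

end

theory Submission
  imports Defs
begin

definition gA :: "nat \<Rightarrow> nat \<Rightarrow> nat \<Rightarrow> complex \<Rightarrow> complex" where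
  "gA d p q z = of_nat d / of_nat (p + q + d) * cgeg (d + 1) p q z"

definition tA :: "nat \<Rightarrow> nat \<Rightarrow> nat \<Rightarrow> complex \<Rightarrow> nat \<Rightarrow> complex" where
  "tA d p q z j = (-1) ^ j * of_nat (fact (d + p + q - j - 1)) /
        (of_nat (fact j) * of_nat (fact (p - j)) * of_nat (fact (q - j))) *
        z ^ (p - j) * cnj z ^ (q - j)"

lemma nz1: "1 + (of_nat n::complex) \<noteq> 0"
proof -
  have "1 + (of_nat n::complex) = of_nat (Suc n)" by simp
  then show ?thesis by (metis of_nat_eq_0_iff nat.distinct(1))
qed

lemma nz2: "2 + (of_nat n::complex) \<noteq> 0"
proof -
  have "2 + (of_nat n::complex) = of_nat (Suc (Suc n))" by simp
  then show ?thesis by (metis of_nat_eq_0_iff nat.distinct(1))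
qed

lemma gA_form:
  assumes "d \<ge> 2"
  shows "gA d p q z = (\<Sum>j = 0..min p q. tA d p q z j) / of_nat (fact (d - 1))"
proof -
  define e where "e = d - 2"
  have e: "d = e + 2" using assms by (simp add: e_def)
  have f: "(fact (e+2) :: complex) = of_nat (e+2) * fact (e+1)"
    using fact_Suc[of "e+1"] by (simp add: algebra_simps)
  have c1: "of_nat (p + q + (d + 1) - 1) / of_nat (fact (d + 1 - 1)) = (of_nat (p+q+e+2) / fact (e+2) :: complex)"
  proof -
    have "p + q + (d + 1) - 1 = p+q+e+2" "d + 1 - 1 = e+2" using e by simp_all
    then show ?thesis by (simp only: of_nat_fact)
  qed
  have c2: "(\<Sum>j = 0..min p q. (-1) ^ j * of_nat (fact (d + 1 + p + q - j - 2)) /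
        (of_nat (fact j) * of_nat (fact (p - j)) * of_nat (fact (q - j))) *
        z ^ (p - j) * cnj z ^ (q - j)) = (\<Sum>j = 0..min p q. tA d p q z j)"
    unfolding tA_def by (rule sum.cong) (simp_all add: e)
  have "gA d p q z = of_nat (e+2) / of_nat (p+q+e+2) * (of_nat (p+q+e+2) / fact (e+2) *
     (\<Sum>j = 0..min p q. tA d p q z j))"
    unfolding gA_def cgeg_def c1 c2 by (simp add: e)
  also have "\<dots> = (\<Sum>j = 0..min p q. tA d p q z j) / fact (e+1)"
    unfolding f by (simp add: nz1 nz2 del: of_nat_add)
  also have "(fact (e+1)::complex) = of_nat (fact (d - 1))"
    by (simp only: e of_nat_fact) simp
  finally show ?thesis .
qed

definition tQ :: "nat \<Rightarrow> nat \<Rightarrow> nat \<Rightarrow> complex \<Rightarrow> nat \<Rightarrow> complex" where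
  "tQ d p q z j = (-1) ^ j * of_nat (fact (d + p + q - j - 2)) /
        (of_nat (fact j) * of_nat (fact (p - j)) * of_nat (fact (q - j))) *
        z ^ (p - j) * cnj z ^ (q - j)"

lemma L0:
  assumes "d \<ge> 2"
  shows "of_nat (p + q + d - 1) * tQ d p q z 0 = tA d p q z 0"
proof -
  define e where "e = d - 2"
  have e: "d = e + 2" using assms by (simp add: e_def)
  have "p + q + d - 1 = Suc (e + p + q)" "d + p + q - 0 - 2 = e + p + q" "d + p + q - 0 - 1 = Suc (e + p + q)"
    using e by simp_all
  then show ?thesis unfolding tQ_def tA_def by (simp add: field_simps)
qed

lemma LS:
  assumes "d \<ge> 2" "j \<le> min p q"
  shows "of_nat (Suc p + Suc q + d - 1) * tQ d (Suc p) (Suc q) z (Suc j)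
     = tA d (Suc p) (Suc q) z (Suc j) - tA d p q z j"
proof -
  define e where "e = d - 2"
  have e: "d = e + 2" using assms by (simp add: e_def)
  obtain a b where ab: "p = j + a" "q = j + b" using assms by (metis le_Suc_ex min.bounded_iff)
  define N where "N = e + j + a + b + 1"
  have h: "Suc p + Suc q + d - 1 = N + j + 2" "d + Suc p + Suc q - Suc j - 2 = N"
     "d + Suc p + Suc q - Suc j - 1 = Suc N" "d + p + q - j - 1 = N"
     "Suc p - Suc j = a" "Suc q - Suc j = b" "p - j = a" "q - j = b"
    using e ab N_def by simp_all
  have nzN: "(fact N :: complex) \<noteq> 0" "(fact j :: complex) \<noteq> 0" "(fact a :: complex) \<noteq> 0" "(fact b :: complex) \<noteq> 0"
    by simp_all
  define K where "K = (-1) ^ j * z ^ a * cnj z ^ b / (fact a * fact b)"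
  have t1: "tQ d (Suc p) (Suc q) z (Suc j) = - (fact N / fact (Suc j)) * K"
    unfolding tQ_def h K_def by (simp add: field_simps del: fact_Suc)
  have t2: "tA d (Suc p) (Suc q) z (Suc j) = - (fact (Suc N) / fact (Suc j)) * K"
    unfolding tA_def h K_def by (simp add: field_simps del: fact_Suc)
  have t3: "tA d p q z j = (fact N / fact j) * K"
    unfolding tA_def h K_def by (simp add: field_simps del: fact_Suc)
  have j1: "(of_nat (Suc j) :: complex) \<noteq> 0" by (metis of_nat_eq_0_iff nat.distinct(1))
  have "of_nat (N + j + 2) * (- (fact N / fact (Suc j))) = - (fact (Suc N) / fact (Suc j)) - (fact N / fact j :: complex)"
    unfolding fact_Suc[of N] fact_Suc[of j] using nzN j1
    by (simp add: field_simps del: of_nat_Suc) (simp add: algebra_simps)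
  then have "of_nat (N + j + 2) * (- (fact N / fact (Suc j))) * K = (- (fact (Suc N) / fact (Suc j)) - (fact N / fact j :: complex)) * K"
    by simp
  then show ?thesis unfolding h(1) t1 t2 t3 by (simp only: left_diff_distrib mult.assoc)
qed

lemma cgeg_form: "cgeg d p q z = of_nat (p + q + d - 1) / of_nat (fact (d - 1)) * sum (tQ d p q z) {0..min p q}"
  by (simp add: cgeg_def tQ_def)

lemma key0:
  assumes "d \<ge> 2" "p = 0 \<or> q = 0"
  shows "cgeg d p q z = gA d p q z"
proof -
  have m: "min p q = 0" using assms(2) by auto
  show ?thesis unfolding cgeg_form gA_form[OF assms(1)] m using L0[OF assms(1), of p q z]
    by simp
qed

lemma keyS:
  assumes "d \<ge> 2"
  shows "cgeg d (Suc p) (Suc q) z = gA d (Suc p) (Suc q) z - gA d p q z"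
proof -
  define m where "m = min p q"
  have m: "min (Suc p) (Suc q) = Suc m" by (simp add: m_def)
  have "of_nat (Suc p + Suc q + d - 1) * sum (tQ d (Suc p) (Suc q) z) {0..Suc m}
      = of_nat (Suc p + Suc q + d - 1) * tQ d (Suc p) (Suc q) z 0
        + (\<Sum>j = 0..m. of_nat (Suc p + Suc q + d - 1) * tQ d (Suc p) (Suc q) z (Suc j))"
    by (subst sum.atLeast0_atMost_Suc_shift) (simp only: distrib_left sum_distrib_left o_def)
  also have "\<dots> = tA d (Suc p) (Suc q) z 0 + (\<Sum>j = 0..m. tA d (Suc p) (Suc q) z (Suc j) - tA d p q z j)"
    using L0[OF assms, of "Suc p" "Suc q" z] LS[OF assms] by (simp add: m_def)
  also have "\<dots> = sum (tA d (Suc p) (Suc q) z) {0..Suc m} - sum (tA d p q z) {0..m}"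
    by (subst sum.atLeast0_atMost_Suc_shift[of _ m]) (simp add: sum_subtractf o_def del: sum.atLeast0_atMost_Suc)
  finally have E: "of_nat (Suc p + Suc q + d - 1) * sum (tQ d (Suc p) (Suc q) z) {0..Suc m}
      = sum (tA d (Suc p) (Suc q) z) {0..Suc m} - sum (tA d p q z) {0..m}" .
  show ?thesis unfolding cgeg_form gA_form[OF assms] m m_def[symmetric]
    using E by (simp add: diff_divide_distrib)
qed

lemma part1:
  assumes "d \<ge> 2"
  shows "(\<Sum>j = 0..min p q. cgeg d (p - j) (q - j) z) = gA d p q z"
proof (induction p arbitrary: q)
  case 0
  then show ?case using key0[OF assms] by simp
next
  case (Suc p)
  show ?case
  proof (cases q)
    case 0
    then show ?thesis using key0[OF assms] by simp
  next
    case (Suc q')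
    have "(\<Sum>j = 0..min (Suc p) q. cgeg d (Suc p - j) (q - j) z)
        = cgeg d (Suc p) (Suc q') z + (\<Sum>j = 0..min p q'. cgeg d (p - j) (q' - j) z)"
      unfolding Suc min_Suc_Suc by (subst sum.atLeast0_atMost_Suc_shift) simp
    also have "\<dots> = gA d (Suc p) q z"
      using Suc.IH[of q'] keyS[OF assms, of p q' z] Suc by simp
    finally show ?thesis .
  qed
qed

theorem lemma5p10:
  fixes d p q :: nat and z :: complex
  assumes "d \<ge> 2"
  shows "((\<Sum>j = 0..min p q. cgeg d (p - j) (q - j) z)
           = of_nat d / of_nat (p + q + d) * cgeg (d + 1) p q z)
         \<and> cgegi d (int p) (int q) z
           = of_nat d / of_nat (p + q + d) * cgegi (d + 1) (int p) (int q) z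
             - of_nat d / (of_int (int p + int q + int d - 2)) * cgegi (d + 1) (int p - 1) (int q - 1) z"
proof
  show "(\<Sum>j = 0..min p q. cgeg d (p - j) (q - j) z)
           = of_nat d / of_nat (p + q + d) * cgeg (d + 1) p q z"
    using part1[OF assms, of p q z] by (simp add: gA_def)
  have A: "cgegi d (int p) (int q) z = cgeg d p q z"
     "of_nat d / of_nat (p + q + d) * cgegi (d + 1) (int p) (int q) z = gA d p q z"
    by (simp_all add: cgegi_def gA_def)
  show "cgegi d (int p) (int q) z
           = of_nat d / of_nat (p + q + d) * cgegi (d + 1) (int p) (int q) z
             - of_nat d / (of_int (int p + int q + int d - 2)) * cgegi (d + 1) (int p - 1) (int q - 1) z"
  proof (cases "p = 0 \<or> q = 0")
    case True
    then have "cgegi (d + 1) (int p - 1) (int q - 1) z = 0" by (auto simp: cgegi_def)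
    then show ?thesis unfolding A using key0[OF assms True] by simp
  next
    case False
    then obtain p' q' where pq: "p = Suc p'" "q = Suc q'" by (metis not0_implies_Suc)
    have "of_nat d / (of_int (int p + int q + int d - 2)) * cgegi (d + 1) (int p - 1) (int q - 1) z
       = gA d p' q' z"
    proof -
      have "int p + int q + int d - 2 = int (p' + q' + d)" "int p - 1 = int p'" "int q - 1 = int q'"
        using pq by simp_all
      have "(of_int (int p + int q + int d - 2)::complex) = of_int (int (p' + q' + d))"
        using pq by simp
      also have "\<dots> = of_nat (p' + q' + d)" by (simp only: of_int_of_nat_eq)
      finally have "(of_int (int p + int q + int d - 2)::complex) = of_nat (p' + q' + d)" .
      moreover have
        "cgegi (d + 1) (int p - 1) (int q - 1) z = cgeg (d + 1) p' q' z"
        using pq by (simp add: cgegi_def)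
      ultimately show ?thesis by (simp only: gA_def)
    qed
    then show ?thesis unfolding A using keyS[OF assms, of p' q' z] pq by simp
  qed
qed

end
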